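(* Let $\sigma$ be a positive integer, $a\in\mathbb{D}$, and for $l\ge1$ let $B_{l,a}(z)=\frac{\sqrt{1-|a|^2}}{1-\overline{a}z}\left(\frac{z-a}{1-\overline{a}z}\right)^{l-1}$ (the Laguerre system). Then there is a constant $C_a$ depending only on $a$ (and $\sigma$) such that for every $f\in H^2_\sigma(\mathbb{D})$ and every integer $n\ge1$, $$\left\|f-\sum_{l=1}^{n}\langle f,B_{l,a}\rangle B_{l,a}\right\|_{H^2}\le C_a\,\frac{1}{n^{\sigma}}\,\|f\|_{H^2_\sigma}.$$
   Context: $\mathbb{D}$ is the open unit disc; $H^2(\mathbb{D})$ the Hardy space with inner product $\langle f,g\rangle=\frac{1}{2\pi}\int_0^{2\pi}f(e^{it})\overline{g(e^{it})}\,dt$; $\{B_{l,a}\}_{l\ge1}$ is a complete orthonormal system of $H^2(\mathbb{D})$. For $\sigma\ge0$, $H^2_\sigma(\mathbb{D})=\{f=\sum_{k\ge0}c_kz^k:\ \sum_{k\ge0}|(1+k^\sigma)c_k|^2<\infty\}$ with $\|f\|_{H^2_\sigma}=\left(\sum_{k\ge0}|(1+k^\sigma)c_k|^2\right)^{1/2}$. *)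

theory Defs
  imports "HOL-Analysis.Analysis"
begin

text \<open>A holomorphic function on the disc given by its Taylor coefficients c;
  evaluated anywhere the series is summed (on the closed disc for the functions
  considered here the series converges absolutely).\<close>
definition taylor_fun :: "(nat \<Rightarrow> complex) \<Rightarrow> complex \<Rightarrow> complex" where
  "taylor_fun c z = (\<Sum>k. c k * z ^ k)"

definition hardy_inner :: "(complex \<Rightarrow> complex) \<Rightarrow> (complex \<Rightarrow> complex) \<Rightarrow> complex" where
  "hardy_inner f g = integral {0..2*pi} (\<lambda>t. f (cis t) * cnj (g (cis t))) / (2 * of_real pi)"

definition hardy_norm :: "(complex \<Rightarrow> complex) \<Rightarrow> real" where
  "hardy_norm f = sqrt (Re (hardy_inner f f))"

definition in_H2_sigma :: "nat \<Rightarrow> (nat \<Rightarrow> complex) \<Rightarrow> bool" where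
  "in_H2_sigma \<sigma> c \<longleftrightarrow> summable (\<lambda>k. (cmod ((1 + of_nat k ^ \<sigma>) * c k))\<^sup>2)"

definition H2_sigma_norm :: "nat \<Rightarrow> (nat \<Rightarrow> complex) \<Rightarrow> real" where
  "H2_sigma_norm \<sigma> c = sqrt (\<Sum>k. (cmod ((1 + of_nat k ^ \<sigma>) * c k))\<^sup>2)"

definition laguerre :: "complex \<Rightarrow> nat \<Rightarrow> complex \<Rightarrow> complex" where
  "laguerre a l z = of_real (sqrt (1 - (cmod a)\<^sup>2)) / (1 - cnj a * z)
      * ((z - a) / (1 - cnj a * z)) ^ (l - 1)"

end

theory Submission
  imports Defs "HOL-Complex_Analysis.Complex_Analysis"
begin

lemma den_nz: fixes a z :: complex assumes "cmod a < 1" "cmod z \<le> 1" shows "1 - cnj a * z \<noteq> 0"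
proof
  assume "1 - cnj a * z = 0"
  hence "cnj a * z = 1" by simp
  hence "cmod a * cmod z = 1" by (metis complex_mod_cnj norm_mult norm_one)
  moreover have "cmod a * cmod z < 1"
    using assms mult_left_le[of "cmod z" "cmod a"] by simp
  ultimately show False by simp
qed

lemma den_ge: fixes a z :: complex assumes "cmod a < 1" "cmod z = 1" shows "cmod (1 - cnj a * z) \<ge> 1 - cmod a"
proof -
  have "cmod (cnj a * z) = cmod a" using assms by (simp add: norm_mult)
  then show ?thesis using norm_triangle_ineq2[of 1 "cnj a * z"] by simp
qed

lemma cnj_unit: fixes z :: complex assumes "cmod z = 1" shows "cnj z = 1 / z"
proof -
  have "z * cnj z = 1" using assms by (metis complex_norm_square mult.commute of_real_1 power_one)
  moreover have "z \<noteq> 0" using assms by auto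
  ultimately show ?thesis by (simp add: field_simps)
qed

lemma num_eq: fixes a z :: complex assumes "cmod z = 1" shows "cmod (z - a) = cmod (1 - cnj a * z)"
proof -
  have "1 - cnj a * z = z * cnj (z - a)" using cnj_unit[OF assms] assms
    by (auto simp: field_simps)
  then have "cmod (1 - cnj a * z) = cmod z * cmod (cnj (z - a))" by (simp add: norm_mult)
  then show ?thesis using assms by (metis complex_mod_cnj mult_cancel_right1)
qed

lemma blaschke_unit: fixes a z :: complex assumes "cmod a < 1" "cmod z = 1" shows "cmod ((z - a) / (1 - cnj a * z)) = 1"
  using num_eq[OF assms(2), of a] den_nz[of a z] assms by (simp add: norm_divide)

lemma circle_has_integral:
  assumes "(f has_contour_integral I) (circlepath 0 1)"
  shows "((\<lambda>t. f (cis t) * \<i> * cis t) has_integral I) {0..2*pi}"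
  using has_contour_integral_part_circlepath_iff[of 0 "2*pi" f I 0 1] assms
  by (simp add: circlepath_def)

lemma lag_prod:
  fixes a z :: complex
  assumes a: "cmod a < 1" and z: "cmod z = 1"
  shows "laguerre a (l+k+1) z * cnj (laguerre a (l+1) z)
       = (1 - (cmod a)\<^sup>2) * z * (z - a)^k / ((1 - cnj a * z)^(k+1) * (z - a))"
proof -
  define s where "s = sqrt (1 - (cmod a)\<^sup>2)"
  define b where "b = (z - a) / (1 - cnj a * z)"
  have d: "1 - cnj a * z \<noteq> 0" using den_nz[OF a] z by simp
  have za: "z - a \<noteq> 0" using a z by auto
  have z0: "z \<noteq> 0" using z by auto
  have bb: "b * cnj b = 1" using blaschke_unit[OF a z] unfolding b_def
    by (metis complex_norm_square mult.commute of_real_1 power_one)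
  have a2: "(cmod a)\<^sup>2 < 1" using a by (simp add: abs_square_less_1)
  have sr: "s * s = 1 - (cmod a)\<^sup>2" unfolding s_def using a2 by simp
  have ss: "of_real s * of_real s = (1 - (cmod a)\<^sup>2 :: complex)"
    by (metis sr of_real_mult of_real_1 of_real_diff of_real_power)
  have cz: "cnj z = 1 / z" using cnj_unit[OF z] .
  define D where "D = 1 - cnj a * z"
  have L: "laguerre a (m+1) z = of_real s / D * b^m" for m
    unfolding laguerre_def s_def D_def b_def by simp
  have "laguerre a (l+k+1) z * cnj (laguerre a (l+1) z)
      = (of_real s / D * b^(l+k)) * (of_real s / cnj D * cnj b^l)"
    using L[of "l+k"] L[of l] by simp
  also have "\<dots> = (of_real s * of_real s) / (D * cnj D) * (b^k * (b * cnj b)^l)"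
    by (simp add: power_add power_mult_distrib)
  also have "\<dots> = (of_real s * of_real s) / (D * cnj D) * b^k"
    using bb by simp
  also have "cnj D = (z - a) / z"
    unfolding D_def using cz z0 by (simp add: field_simps)
  also have "(of_real s * of_real s) / (D * ((z - a) / z)) * b^k
     = (1 - (cmod a)\<^sup>2) * z * (z - a)^k / (D^(k+1) * (z - a))"
  proof -
    have dD: "D \<noteq> 0" using d D_def by simp
    have bD: "b = (z - a) / D" unfolding b_def D_def ..
    have "(of_real s * of_real s) / (D * ((z - a) / z)) * b^k
        = (1 - (cmod a)\<^sup>2) * z * (z - a)^k / (D * D^k * (z - a))"
      unfolding bD ss power_divide using dD za z0 by (simp add: divide_simps)
    then show ?thesis by (simp add: mult.commute)
  qed
  finally show ?thesis unfolding D_def .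
qed

lemma lag_orth_diag:
  fixes a :: complex assumes a: "cmod a < 1"
  shows "((\<lambda>t. laguerre a (l+k+1) (cis t) * cnj (laguerre a (l+1) (cis t)))
           has_integral (if k = 0 then 2*pi else 0)) {0..2*pi}"
proof -
  define X :: complex where "X = of_real (1 - (cmod a)\<^sup>2)"
  define f where "f z = X * (z - a)^k / (\<i> * (1 - cnj a * z)^(k+1) * (z - a))" for z
  have eq: "laguerre a (l+k+1) (cis t) * cnj (laguerre a (l+1) (cis t)) = f (cis t) * \<i> * cis t" for t
  proof -
    have "laguerre a (l+k+1) (cis t) * cnj (laguerre a (l+1) (cis t))
      = X * cis t * (cis t - a)^k / ((1 - cnj a * cis t)^(k+1) * (cis t - a))"
      using lag_prod[OF a, of "cis t" l k] unfolding X_def by simp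
    moreover have "f z * \<i> * z = X * z * (z - a)^k / ((1 - cnj a * z)^(k+1) * (z - a))" for z
    proof -
      define Q where "Q = (1 - cnj a * z)^(k+1) * (z - a)"
      have "f z = X * (z - a)^k / (\<i> * Q)" unfolding f_def Q_def by (simp add: mult.assoc)
      then show ?thesis unfolding Q_def[symmetric] by (cases "Q = 0") (auto simp: field_simps)
    qed
    ultimately show ?thesis by simp
  qed
  define G where "G j z = X / (\<i> * (1 - cnj a * z)^(k+1)) * (z - a)^j" for j z
  have cont_den: "continuous_on (cball 0 1) (G j)" for j
    unfolding G_def by (intro continuous_intros) (use den_nz[OF a] in auto)
  have hol_den: "G j holomorphic_on ball 0 1" for j
    unfolding G_def by (intro holomorphic_intros) (use den_nz[OF a] in auto)
  have I: "(f has_contour_integral (if k = 0 then 2*pi else 0)) (circlepath 0 1)"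
  proof (cases "k = 0")
    case True
    have "((\<lambda>u. G 0 u / (u - a)) has_contour_integral (2 * of_real pi * \<i> * G 0 a)) (circlepath 0 1)"
      by (rule Cauchy_integral_circlepath[OF cont_den hol_den]) (use a in auto)
    moreover have "G 0 a = 1 / \<i>"
    proof -
      have "cnj a * a = of_real ((cmod a)\<^sup>2)"
        using complex_norm_square[of a] by (simp add: mult.commute)
      moreover have "1 - (cmod a)\<^sup>2 \<noteq> 0"
        using a by (metis abs_norm_cancel abs_square_less_1 less_irrefl right_minus_eq)
      ultimately have "1 - cnj a * a = X" "X \<noteq> 0" unfolding X_def
        by (simp, metis of_real_eq_0_iff)
      then show ?thesis unfolding G_def using True by simp
    qed
    moreover have "(\<lambda>u. G 0 u / (u - a)) = f"
      using True unfolding G_def f_def by (simp add: fun_eq_iff)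
    ultimately show ?thesis using True by (simp add: mult.assoc)
  next
    case False
    have "(G (k-1) has_contour_integral 0) (circlepath 0 1)"
      by (rule Cauchy_theorem_disc[where K = "{}" and a = 0 and e = 1, OF _ cont_den])
         (auto intro!: holomorphic_on_imp_differentiable_at[OF hol_den])
    then have "(f has_contour_integral 0) (circlepath 0 1)"
    proof (rule has_contour_integral_eq)
      fix z assume "z \<in> path_image (circlepath 0 1)"
      then have "z - a \<noteq> 0" using a by auto
      moreover have "(z - a)^k = (z - a)^(k-1) * (z - a)"
        using False by (metis power_minus_mult zero_less_iff_neq_zero)
      ultimately have "f z = (X * (z - a)^(k-1)) * (z - a) / ((\<i> * (1 - cnj a * z)^(k+1)) * (z - a))"
        unfolding f_def by (simp add: mult.assoc)
      also have "\<dots> = (X * (z - a)^(k-1)) / (\<i> * (1 - cnj a * z)^(k+1))"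
        by (rule nonzero_mult_divide_mult_cancel_right) fact
      finally show "G (k-1) z = f z" unfolding G_def by simp
    qed
    then show ?thesis using False by simp
  qed
  show ?thesis
    using circle_has_integral[OF I] by (rule has_integral_eq[rotated]) (use eq in metis)
qed

lemma hardy_inner_cnj: "hardy_inner g f = cnj (hardy_inner f g)"
  unfolding hardy_inner_def by (simp add: integral_cnj mult.commute)

lemma lag_inner:
  fixes a :: complex assumes a: "cmod a < 1"
  shows "hardy_inner (laguerre a (m+1)) (laguerre a (l+1)) = (if m = l then 1 else 0)"
proof -
  have ge: "hardy_inner (laguerre a (m+1)) (laguerre a (l+1)) = (if m = l then 1 else 0)" if "l \<le> m" for m l
  proof -
    obtain k where k: "m = l + k" using \<open>l \<le> m\<close> le_Suc_ex by blast
    have "integral {0..2*pi} (\<lambda>t. laguerre a (m+1) (cis t) * cnj (laguerre a (l+1) (cis t)))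
        = (if k = 0 then 2*pi else 0)"
      using lag_orth_diag[OF a, of l k] k by (simp add: integral_unique)
    then show ?thesis unfolding hardy_inner_def using k by auto
  qed
  show ?thesis
  proof (cases "l \<le> m")
    case True then show ?thesis using ge by blast
  next
    case False
    then show ?thesis using ge[of m l] hardy_inner_cnj[of "laguerre a (m+1)" "laguerre a (l+1)"]
      by auto
  qed
qed

lemma lag_bound:
  fixes a z :: complex assumes a: "cmod a < 1" and z: "cmod z = 1"
  shows "cmod (laguerre a (m+1) z) \<le> sqrt (1 - (cmod a)\<^sup>2) / (1 - cmod a)"
proof -
  define s where "s = sqrt (1 - (cmod a)\<^sup>2)"
  have s0: "s \<ge> 0" unfolding s_def using a by (simp add: abs_square_le_1 less_imp_le)
  have "cmod (laguerre a (m+1) z) = s / cmod (1 - cnj a * z) * cmod ((z - a) / (1 - cnj a * z)) ^ m"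
    unfolding laguerre_def s_def[symmetric] using s0 by (simp add: norm_mult norm_divide norm_power)
  also have "\<dots> = s / cmod (1 - cnj a * z)" using blaschke_unit[OF a z] by simp
  also have "\<dots> \<le> s / (1 - cmod a)"
    by (rule divide_left_mono) (use den_ge[OF a z] a s0 in \<open>auto intro!: mult_pos_pos\<close>)
  finally show ?thesis unfolding s_def .
qed

lemma lag_cont:
  fixes a :: complex assumes a: "cmod a < 1"
  shows "continuous_on UNIV (\<lambda>t. laguerre a m (cis t))"
  unfolding laguerre_def
  by (intro continuous_intros) (use den_nz[OF a] in auto)

lemma series_ul:
  fixes a :: complex and G :: "nat \<Rightarrow> complex" and S :: "complex \<Rightarrow> complex"
  assumes a: "cmod a < 1" and sG: "summable (\<lambda>m. cmod (G m))"
    and S: "\<And>t. (\<lambda>m. G m * laguerre a (m+1) (cis t)) sums S (cis t)"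
    and hb: "\<And>t. t \<in> A \<Longrightarrow> cmod (h t) \<le> H"
  shows "uniform_limit A (\<lambda>N t. \<Sum>m<N. G m * laguerre a (m+1) (cis t) * h t)
            (\<lambda>t. S (cis t) * h t) sequentially"
proof -
  define M where "M = sqrt (1 - (cmod a)\<^sup>2) / (1 - cmod a)"
  have M0: "M \<ge> 0" unfolding M_def using a by (intro divide_nonneg_nonneg) (auto simp: abs_square_le_1 less_imp_le)
  have H0: "H \<ge> 0" if "A \<noteq> {}" using hb that by (meson ex_in_conv norm_ge_zero order_trans)
  have "uniform_limit A (\<lambda>N t. \<Sum>m<N. G m * laguerre a (m+1) (cis t) * h t)
            (\<lambda>t. suminf (\<lambda>m. G m * laguerre a (m+1) (cis t) * h t)) sequentially"
  proof (cases "A = {}")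
    case True then show ?thesis by (simp add: uniform_limit_iff)
  next
    case False
    show ?thesis
    proof (rule Weierstrass_m_test)
      fix m t assume t: "t \<in> A"
      have "cmod (G m * laguerre a (m+1) (cis t) * h t) = cmod (G m) * cmod (laguerre a (m+1) (cis t)) * cmod (h t)"
        by (simp add: norm_mult)
      also have "\<dots> \<le> cmod (G m) * M * H"
        by (intro mult_mono) (use lag_bound[OF a, of "cis t" m, folded M_def] hb[OF t] H0[OF False] M0 in auto)
      finally show "cmod (G m * laguerre a (m+1) (cis t) * h t) \<le> cmod (G m) * M * H" .
    next
      show "summable (\<lambda>m. cmod (G m) * M * H)" using sG by (intro summable_mult2)
    qed
  qed
  moreover have "suminf (\<lambda>m. G m * laguerre a (m+1) (cis t) * h t) = S (cis t) * h t" for t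
    using sums_mult2[OF S[of t], of "h t"] by (simp add: sums_unique[symmetric])
  ultimately show ?thesis by simp
qed

lemma series_cont:
  fixes a :: complex and G :: "nat \<Rightarrow> complex" and S :: "complex \<Rightarrow> complex"
  assumes a: "cmod a < 1" and sG: "summable (\<lambda>m. cmod (G m))"
    and S: "\<And>t. (\<lambda>m. G m * laguerre a (m+1) (cis t)) sums S (cis t)"
  shows "continuous_on UNIV (\<lambda>t. S (cis t))"
proof -
  have "uniform_limit UNIV (\<lambda>N t. \<Sum>m<N. G m * laguerre a (m+1) (cis t) * 1)
            (\<lambda>t. S (cis t) * 1) sequentially"
    by (rule series_ul[OF a sG S, of UNIV "\<lambda>_. 1" 1]) simp
  then have "continuous_on UNIV (\<lambda>t. S (cis t) * 1)"
    by (rule uniform_limit_theorem[rotated])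
       (auto intro!: always_eventually continuous_intros lag_cont[OF a])
  then show ?thesis by simp
qed

lemma bounded_on_interval:
  fixes f :: "real \<Rightarrow> complex"
  assumes "continuous_on {a..b} f"
  obtains B where "\<And>t. t \<in> {a..b} \<Longrightarrow> cmod (f t) \<le> B"
proof -
  have "compact (f ` {a..b})" by (rule compact_continuous_image[OF assms compact_Icc])
  then obtain B where "\<forall>x\<in>f ` {a..b}. norm x \<le> B" using compact_imp_bounded bounded_iff by metis
  then show ?thesis using that by blast
qed

lemma series_inner:
  fixes a :: complex and G :: "nat \<Rightarrow> complex" and S h :: "complex \<Rightarrow> complex"
  assumes a: "cmod a < 1" and sG: "summable (\<lambda>m. cmod (G m))"
    and S: "\<And>t. (\<lambda>m. G m * laguerre a (m+1) (cis t)) sums S (cis t)"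
    and hc: "continuous_on UNIV (\<lambda>t. h (cis t))"
  shows "(\<lambda>m. G m * hardy_inner (laguerre a (m+1)) h) sums hardy_inner S h"
proof -
  have hc': "continuous_on {0..2*pi} (\<lambda>t. cnj (h (cis t)))"
    by (intro continuous_intros continuous_on_subset[OF hc]) auto
  obtain H where H: "\<And>t. t \<in> {0..2*pi} \<Longrightarrow> cmod (cnj (h (cis t))) \<le> H"
    using bounded_on_interval[OF hc'] by blast
  have UL: "uniform_limit {0..2*pi} (\<lambda>N t. \<Sum>m<N. G m * laguerre a (m+1) (cis t) * cnj (h (cis t)))
            (\<lambda>t. S (cis t) * cnj (h (cis t))) sequentially"
    by (rule series_ul[OF a sG S H])
  have cN: "continuous_on {0..2*pi} (\<lambda>t. \<Sum>m<N. G m * laguerre a (m+1) (cis t) * cnj (h (cis t)))" for N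
    by (intro continuous_intros continuous_on_subset[OF lag_cont[OF a]] hc') auto
  define K where "K m = integral {0..2*pi} (\<lambda>t. laguerre a (m+1) (cis t) * cnj (h (cis t)))" for m
  have Kint: "((\<lambda>t. laguerre a (m+1) (cis t) * cnj (h (cis t))) has_integral K m) {0..2*pi}" for m
    unfolding K_def
    by (intro integrable_integral integrable_continuous_interval continuous_intros
          continuous_on_subset[OF lag_cont[OF a]] hc') auto
  obtain I J where I: "\<And>N. ((\<lambda>t. \<Sum>m<N. G m * laguerre a (m+1) (cis t) * cnj (h (cis t))) has_integral I N) {0..2*pi}"
    and J: "((\<lambda>t. S (cis t) * cnj (h (cis t))) has_integral J) {0..2*pi}"
    and IJ: "I \<longlonglongrightarrow> J"
    using uniform_limit_integral[OF UL cN] by auto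
  have IN: "I N = (\<Sum>m<N. G m * K m)" for N
  proof -
    have "((\<lambda>t. \<Sum>m<N. G m * (laguerre a (m+1) (cis t) * cnj (h (cis t)))) has_integral (\<Sum>m<N. G m * K m)) {0..2*pi}"
      by (intro has_integral_sum has_integral_mult_right Kint) auto
    then show ?thesis using I[of N] by (simp add: mult.assoc has_integral_unique)
  qed
  have "I = (\<lambda>N. \<Sum>m<N. G m * K m)" using IN by (simp add: fun_eq_iff)
  then have "(\<lambda>m. G m * K m) sums J" using IJ unfolding sums_def by simp
  then have "(\<lambda>m. G m * K m / (2 * of_real pi)) sums (J / (2 * of_real pi))"
    by (rule sums_divide)
  moreover have "hardy_inner S h = J / (2 * of_real pi)"
    unfolding hardy_inner_def using J by (simp add: integral_unique)
  moreover have "hardy_inner (laguerre a (m+1)) h = K m / (2 * of_real pi)" for m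
    unfolding hardy_inner_def K_def ..
  ultimately show ?thesis by simp
qed

lemma series_coeff:
  fixes a :: complex and G :: "nat \<Rightarrow> complex" and S :: "complex \<Rightarrow> complex"
  assumes a: "cmod a < 1" and sG: "summable (\<lambda>m. cmod (G m))"
    and S: "\<And>t. (\<lambda>m. G m * laguerre a (m+1) (cis t)) sums S (cis t)"
  shows "hardy_inner S (laguerre a (l+1)) = G l"
proof -
  have "(\<lambda>m. G m * hardy_inner (laguerre a (m+1)) (laguerre a (l+1))) sums hardy_inner S (laguerre a (l+1))"
    by (rule series_inner[OF a sG S lag_cont[OF a]])
  moreover have "(\<lambda>m. G m * hardy_inner (laguerre a (m+1)) (laguerre a (l+1))) = (\<lambda>m. if m = l then G l else 0)"
  proof -
    have li: "hardy_inner (laguerre a (Suc m)) (laguerre a (Suc l)) = (if m = l then 1 else 0)" for m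
      using lag_inner[OF a, of m l] by simp
    show ?thesis by (simp add: li fun_eq_iff)
  qed
  ultimately have "(\<lambda>m. if m = l then G l else 0) sums hardy_inner S (laguerre a (l+1))" by simp
  moreover have "(\<lambda>m. if m = l then G l else 0) sums G l" using sums_single[of l "\<lambda>_. G l"] by simp
  ultimately show ?thesis by (rule sums_unique2)
qed

lemma series_norm2:
  fixes a :: complex and G :: "nat \<Rightarrow> complex" and S :: "complex \<Rightarrow> complex"
  assumes a: "cmod a < 1" and sG: "summable (\<lambda>m. cmod (G m))"
    and S: "\<And>t. (\<lambda>m. G m * laguerre a (m+1) (cis t)) sums S (cis t)"
  shows "(\<lambda>m. (cmod (G m))\<^sup>2) sums Re (hardy_inner S S)" and "hardy_inner S S = of_real (Re (hardy_inner S S))"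
proof -
  have "(\<lambda>m. G m * hardy_inner (laguerre a (m+1)) S) sums hardy_inner S S"
    by (rule series_inner[OF a sG S series_cont[OF a sG S]])
  moreover have "G m * hardy_inner (laguerre a (m+1)) S = of_real ((cmod (G m))\<^sup>2)" for m
  proof -
    have "G m * cnj (G m) = of_real ((cmod (G m))\<^sup>2)" by (rule complex_norm_square[symmetric])
    then show ?thesis using hardy_inner_cnj[of "laguerre a (m+1)" S] series_coeff[OF a sG S, of m]
      by simp
  qed
  ultimately have *: "(\<lambda>m. complex_of_real ((cmod (G m))\<^sup>2)) sums hardy_inner S S" by simp
  from sums_Re[OF *] show "(\<lambda>m. (cmod (G m))\<^sup>2) sums Re (hardy_inner S S)" by simp
  from sums_Im[OF *] have "Im (hardy_inner S S) = 0" by (simp add: sums_0 sums_unique2)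
  then show "hardy_inner S S = of_real (Re (hardy_inner S S))" by (simp add: complex_eq_iff)
qed

lemma lag0: "laguerre 0 (m+1) z = z ^ m"
  by (simp add: laguerre_def)

lemma holo_expand:
  assumes F: "F holomorphic_on ball 0 R" and R: "R > 1"
  shows "summable (\<lambda>m. cmod ((deriv^^m) F 0 / fact m))"
    and "\<And>w. cmod w \<le> 1 \<Longrightarrow> (\<lambda>m. (deriv^^m) F 0 / fact m * w^m) sums F w"
proof -
  define r :: complex where "r = of_real ((1 + R) / 2)"
  have nr: "norm r = (1 + R) / 2" unfolding r_def norm_of_real using R by simp
  have rb: "r \<in> ball 0 R" using R nr by simp
  have "summable (\<lambda>m. (deriv^^m) F 0 / fact m * r^m)"
    using holomorphic_power_series[OF F rb] by (auto simp: sums_iff)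
  moreover have "norm (1::complex) < norm r" using R nr by simp
  ultimately have "summable (\<lambda>m. norm ((deriv^^m) F 0 / fact m * 1^m))"
    by (rule powser_insidea)
  then show "summable (\<lambda>m. cmod ((deriv^^m) F 0 / fact m))" by simp
  fix w :: complex assume "cmod w \<le> 1"
  then have "w \<in> ball 0 R" using R by simp
  from holomorphic_power_series[OF F this] show "(\<lambda>m. (deriv^^m) F 0 / fact m * w^m) sums F w" by simp
qed

definition sa :: "complex \<Rightarrow> real" where "sa a = sqrt (1 - (cmod a)\<^sup>2)"
definition gM :: "complex \<Rightarrow> complex \<Rightarrow> complex" where "gM a w = of_real (sa a) / (1 + cnj a * w)"
definition phM :: "complex \<Rightarrow> complex \<Rightarrow> complex" where "phM a w = (w + a) / (1 + cnj a * w)"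
definition RM :: "complex \<Rightarrow> real" where "RM a = (if a = 0 then 2 else 1 / cmod a)"

lemma RM_gt: "cmod a < 1 \<Longrightarrow> RM a > 1"
  unfolding RM_def by (auto simp: field_simps)

lemma den2_nz:
  assumes a: "cmod a < 1" and w: "w \<in> ball 0 (RM a)"
  shows "1 + cnj a * w \<noteq> 0"
proof (cases "a = 0")
  case False
  have "cmod w < 1 / cmod a" using w False by (simp add: RM_def)
  then have "cmod a * cmod w < 1" using False by (simp add: field_simps)
  then have "cmod (cnj a * w) < 1" by (simp add: norm_mult)
  show ?thesis
  proof
    assume "1 + cnj a * w = 0"
    then have "cnj a * w = -1" by (simp add: add_eq_0_iff)
    then have "cmod (cnj a * w) = 1" by simp
    with \<open>cmod (cnj a * w) < 1\<close> show False by simp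
  qed
qed simp

lemma sa_sq: "cmod a < 1 \<Longrightarrow> of_real (sa a) * of_real (sa a) = 1 - cnj a * a"
proof -
  assume a: "cmod a < 1"
  have a2: "(cmod a)\<^sup>2 < 1" using a by (simp add: abs_square_less_1)
  have "sa a * sa a = 1 - (cmod a)\<^sup>2" unfolding sa_def using a2 by simp
  then have "of_real (sa a) * of_real (sa a) = (of_real (1 - (cmod a)\<^sup>2) :: complex)"
    by (metis of_real_mult)
  also have "\<dots> = 1 - cnj a * a" using complex_norm_square[of a] by (simp add: mult.commute)
  finally show ?thesis .
qed

lemma U_hol:
  assumes a: "cmod a < 1" and P: "P holomorphic_on UNIV"
  shows "(\<lambda>w. gM a w * P (phM a w)) holomorphic_on ball 0 (RM a)"
proof -
  have "phM a holomorphic_on ball 0 (RM a)"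
    unfolding phM_def by (intro holomorphic_intros) (use den2_nz[OF a] in auto)
  then have "(P \<circ> phM a) holomorphic_on ball 0 (RM a)"
    by (rule holomorphic_on_compose) (rule holomorphic_on_subset[OF P], simp)
  moreover have "gM a holomorphic_on ball 0 (RM a)"
    unfolding gM_def by (intro holomorphic_intros) (use den2_nz[OF a] in auto)
  ultimately show ?thesis by (intro holomorphic_intros) (auto simp: o_def)
qed

lemma inv_ident:
  assumes a: "cmod a < 1" and z: "cmod z = 1"
  defines "b \<equiv> (z - a) / (1 - cnj a * z)"
  shows "of_real (sa a) / (1 - cnj a * z) * gM a b = 1" and "phM a b = z" and "cmod b = 1"
proof -
  define D where "D = 1 - cnj a * z"
  define X where "X = 1 - cnj a * a"
  have D: "D \<noteq> 0" unfolding D_def using den_nz[OF a] z by simp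
  have X: "X \<noteq> 0" unfolding X_def using den_nz[OF a, of a] a by simp
  have bD: "b = (z - a) / D" unfolding b_def D_def ..
  have "1 + cnj a * b = (1 * D + cnj a * (z - a)) / D"
    unfolding bD times_divide_eq_right using add_divide_eq_iff[OF D] by simp
  also have "1 * D + cnj a * (z - a) = X" unfolding D_def X_def by (simp add: algebra_simps)
  finally have e1: "1 + cnj a * b = X / D" .
  have "b + a = (z - a + a * D) / D" unfolding bD using divide_add_eq_iff[OF D] by simp
  also have "z - a + a * D = z * X" unfolding D_def X_def by (simp add: algebra_simps)
  finally have e2: "b + a = z * X / D" .
  have "of_real (sa a) / D * (of_real (sa a) / (X / D)) = (of_real (sa a) * of_real (sa a)) / X * (D / D)"
    by (simp only: divide_divide_eq_right times_divide_times_eq mult_ac)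
  also have "\<dots> = 1" unfolding sa_sq[OF a] X_def[symmetric] using X D by simp
  finally show "of_real (sa a) / (1 - cnj a * z) * gM a b = 1"
    unfolding gM_def e1 D_def[symmetric] .
  have "z * X / D / (X / D) = z" using X D by (simp add: field_simps)
  then show "phM a b = z" unfolding phM_def e1 e2 .
  show "cmod b = 1" unfolding b_def by (rule blaschke_unit[OF a z])
qed

lemma lag_split: "laguerre a (m+1) z = of_real (sa a) / (1 - cnj a * z) * ((z - a) / (1 - cnj a * z)) ^ m"
  unfolding laguerre_def sa_def by simp

lemma U_expand:
  assumes a: "cmod a < 1" and P: "P holomorphic_on UNIV"
  defines "F \<equiv> (\<lambda>w. gM a w * P (phM a w))"
  shows "summable (\<lambda>m. cmod ((deriv^^m) F 0 / fact m))"
    and "\<And>t. (\<lambda>m. (deriv^^m) F 0 / fact m * laguerre a (m+1) (cis t)) sums P (cis t)"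
    and "\<And>t. (\<lambda>m. (deriv^^m) F 0 / fact m * laguerre 0 (m+1) (cis t)) sums F (cis t)"
proof -
  have Fh: "F holomorphic_on ball 0 (RM a)" unfolding F_def by (rule U_hol[OF a P])
  note E = holo_expand[OF Fh RM_gt[OF a]]
  show "summable (\<lambda>m. cmod ((deriv^^m) F 0 / fact m))" by (rule E(1))
  fix t
  show "(\<lambda>m. (deriv^^m) F 0 / fact m * laguerre 0 (m+1) (cis t)) sums F (cis t)"
    unfolding lag0 using E(2)[of "cis t"] by simp
  define z where "z = cis t"
  have z: "cmod z = 1" unfolding z_def by simp
  define b where "b = (z - a) / (1 - cnj a * z)"
  define k where "k = of_real (sa a) / (1 - cnj a * z)"
  have S1: "(\<lambda>m. k * ((deriv^^m) F 0 / fact m * b^m)) sums (k * F b)"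
    by (rule sums_mult[OF E(2)]) (use inv_ident(3)[OF a z] in \<open>simp add: b_def\<close>)
  have "k * F b = (k * gM a b) * P (phM a b)" unfolding F_def by (simp only: mult.assoc)
  also have "\<dots> = P z" using inv_ident(1,2)[OF a z] unfolding k_def b_def by simp
  finally have kF: "k * F b = P z" .
  have eqf: "(\<lambda>m. k * ((deriv^^m) F 0 / fact m * b^m)) = (\<lambda>m. (deriv^^m) F 0 / fact m * laguerre a (m+1) z)"
    unfolding lag_split k_def b_def by (simp add: mult_ac fun_eq_iff)
  from S1 show "(\<lambda>m. (deriv^^m) F 0 / fact m * laguerre a (m+1) (cis t)) sums P (cis t)"
    unfolding eqf kF z_def .
qed

lemma U_iso:
  assumes a: "cmod a < 1" and P: "P holomorphic_on UNIV"
  shows "hardy_inner P P = hardy_inner (\<lambda>w. gM a w * P (phM a w)) (\<lambda>w. gM a w * P (phM a w))"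
proof -
  define F where "F = (\<lambda>w. gM a w * P (phM a w))"
  note U = U_expand[OF a P, folded F_def]
  have z0: "cmod (0::complex) < 1" by simp
  note n1 = series_norm2[OF a U(1) U(2)] and n2 = series_norm2[OF z0 U(1) U(3)]
  have "Re (hardy_inner P P) = Re (hardy_inner F F)" using n1(1) n2(1) unfolding F_def by (simp add: sums_iff)
  then have "hardy_inner P P = hardy_inner F F" using n1(2) n2(2) unfolding F_def by simp
  then show ?thesis unfolding F_def .
qed

lemma chain_deriv:
  fixes g ph :: "complex \<Rightarrow> complex" and S :: "complex set"
  assumes S: "open S" and g: "g holomorphic_on S" and ph: "ph holomorphic_on S"
  shows "\<exists>h::nat \<Rightarrow> complex \<Rightarrow> complex. (\<forall>j. h j holomorphic_on S) \<and>
     (\<forall>P. P holomorphic_on UNIV \<longrightarrow>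
        (\<forall>w\<in>S. (deriv^^n) (\<lambda>w. g w * P (ph w)) w = (\<Sum>j\<le>n. h j w * (deriv^^j) P (ph w))))"
proof (induction n)
  case 0
  show ?case
    by (rule exI[where x = "\<lambda>j. if j = 0 then g else (\<lambda>_. 0)"]) (auto simp: g)
next
  case (Suc n)
  then obtain h where hh: "\<And>j. h j holomorphic_on S"
    and hP: "\<And>P w. P holomorphic_on UNIV \<Longrightarrow> w \<in> S \<Longrightarrow>
        (deriv^^n) (\<lambda>w. g w * P (ph w)) w = (\<Sum>j\<le>n. h j w * (deriv^^j) P (ph w))"
    by blast
  define h' where "h' j w = (if j \<le> n then deriv (h j) w else 0) + (if j = 0 then 0 else h (j-1) w * deriv ph w)" for j w
  have hh': "h' j holomorphic_on S" for j
  proof -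
    have d1: "(\<lambda>w. if j \<le> n then deriv (h j) w else 0) holomorphic_on S"
      by (cases "j \<le> n") (auto intro: holomorphic_deriv[OF hh S])
    have d2: "(\<lambda>w. if j = 0 then 0 else h (j-1) w * deriv ph w) holomorphic_on S"
      by (cases "j = 0") (auto intro!: holomorphic_intros holomorphic_deriv[OF ph S] hh)
    show ?thesis unfolding h'_def using d1 d2 by (rule holomorphic_on_add)
  qed
  have step: "(deriv^^Suc n) (\<lambda>w. g w * P (ph w)) w = (\<Sum>j\<le>Suc n. h' j w * (deriv^^j) P (ph w))"
    if P: "P holomorphic_on UNIV" and w: "w \<in> S" for P w
  proof -
    define Q where "Q w = (\<Sum>j\<le>n. h j w * (deriv^^j) P (ph w))" for w
    have "(deriv^^Suc n) (\<lambda>w. g w * P (ph w)) w = deriv ((deriv^^n) (\<lambda>w. g w * P (ph w))) w" by simp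
    also have "\<dots> = deriv Q w"
    proof (rule deriv_cong_ev)
      show "\<forall>\<^sub>F x in nhds w. (deriv^^n) (\<lambda>w. g w * P (ph w)) x = Q x"
        using eventually_nhds_in_open[OF S w] by eventually_elim (simp add: hP[OF P] Q_def)
    qed simp
    also have "deriv Q w = (\<Sum>j\<le>n. deriv (h j) w * (deriv^^j) P (ph w) + ((deriv^^Suc j) P (ph w) * deriv ph w) * h j w)"
    proof (rule DERIV_imp_deriv)
      have Pj: "((deriv^^j) P has_field_derivative (deriv^^Suc j) P z) (at z)" for j z
        using holomorphic_derivI[OF holomorphic_higher_deriv[OF P open_UNIV, of j] open_UNIV, of z UNIV]
        by simp
      have dj: "((\<lambda>w. h j w * (deriv^^j) P (ph w)) has_field_derivative
          (deriv (h j) w * (deriv^^j) P (ph w) + ((deriv^^Suc j) P (ph w) * deriv ph w) * h j w)) (at w)" for j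
        by (rule DERIV_mult[OF holomorphic_derivI[OF hh S w] DERIV_chain2[OF Pj holomorphic_derivI[OF ph S w]]])
      show "(Q has_field_derivative (\<Sum>j\<le>n. deriv (h j) w * (deriv^^j) P (ph w) + ((deriv^^Suc j) P (ph w) * deriv ph w) * h j w)) (at w)"
        unfolding Q_def by (rule DERIV_sum) (rule dj)
    qed
    also have "\<dots> = (\<Sum>j\<le>Suc n. h' j w * (deriv^^j) P (ph w))"
    proof -
      have A: "(\<Sum>j\<le>Suc n. (if j \<le> n then deriv (h j) w else 0) * (deriv^^j) P (ph w))
             = (\<Sum>j\<le>n. deriv (h j) w * (deriv^^j) P (ph w))"
        by (simp add: sum.atMost_Suc)
      have B: "(\<Sum>j\<le>Suc n. (if j = 0 then 0 else h (j-1) w * deriv ph w) * (deriv^^j) P (ph w))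
             = (\<Sum>j\<le>n. ((deriv^^Suc j) P (ph w) * deriv ph w) * h j w)"
        by (subst sum.atMost_Suc_shift) (simp add: mult_ac)
      show ?thesis unfolding h'_def distrib_right sum.distrib A B ..
    qed
    finally show ?thesis .
  qed
  show ?case using hh' step by blast
qed

definition ffn :: "nat \<Rightarrow> nat \<Rightarrow> nat" where "ffn k j = (\<Prod>i<j. k - i)"

lemma ffn_Suc: "ffn k (Suc j) = ffn k j * (k - j)"
  unfolding ffn_def by simp

lemma ffn_zero: "k < j \<Longrightarrow> ffn k j = 0"
  unfolding ffn_def by (rule prod_zero) auto

lemma ffn_le: "ffn k j \<le> k ^ j"
proof -
  have "(\<Prod>i<j. k - i) \<le> (\<Prod>i<j. k)" by (rule prod_mono) auto
  then show ?thesis unfolding ffn_def by simp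
qed

lemma poly_deriv:
  "(deriv^^j) (\<lambda>z. \<Sum>k<N. c k * z^k) = (\<lambda>z::complex. \<Sum>k<N. c k * of_nat (ffn k j) * z^(k-j))"
proof (induction j)
  case 0
  show ?case by (simp add: ffn_def)
next
  case (Suc j)
  have "deriv (\<lambda>z::complex. \<Sum>k<N. c k * of_nat (ffn k j) * z^(k-j)) z
      = (\<Sum>k<N. c k * of_nat (ffn k (Suc j)) * z^(k - Suc j))" for z
  proof (rule DERIV_imp_deriv)
    have d: "((\<lambda>z::complex. c k * of_nat (ffn k j) * z^(k-j)) has_field_derivative
          c k * of_nat (ffn k (Suc j)) * z^(k - Suc j)) (at z)" for k
    proof -
      have "((\<lambda>z::complex. c k * of_nat (ffn k j) * z^(k-j)) has_field_derivative
          c k * of_nat (ffn k j) * (of_nat (k-j) * z^(k-j-1))) (at z)"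
        by (auto intro!: derivative_eq_intros)
      moreover have "c k * of_nat (ffn k j) * (of_nat (k-j) * z^(k-j-1)) = c k * of_nat (ffn k (Suc j)) * z^(k - Suc j)"
        by (simp add: ffn_Suc of_nat_mult)
      ultimately show ?thesis by (simp only:)
    qed
    show "((\<lambda>z. \<Sum>k<N. c k * of_nat (ffn k j) * z^(k-j)) has_field_derivative
        (\<Sum>k<N. c k * of_nat (ffn k (Suc j)) * z^(k - Suc j))) (at z)"
      by (rule DERIV_sum) (rule d)
  qed
  then show ?case using Suc.IH by simp
qed

lemma hardy_re:
  assumes f: "continuous_on UNIV (\<lambda>t. f (cis t))"
  shows "((\<lambda>t. (cmod (f (cis t)))\<^sup>2) has_integral (2*pi * Re (hardy_inner f f))) {0..2*pi}"
proof -
  have "continuous_on {0..2*pi} (\<lambda>t. (cmod (f (cis t)))\<^sup>2)"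
    by (intro continuous_intros continuous_on_subset[OF f]) auto
  then obtain I where I: "((\<lambda>t. (cmod (f (cis t)))\<^sup>2) has_integral I) {0..2*pi}"
    using integrable_continuous_interval by blast
  have "((\<lambda>t. complex_of_real ((cmod (f (cis t)))\<^sup>2)) has_integral of_real I) {0..2*pi}"
    by (rule has_integral_of_real[OF I])
  moreover have "complex_of_real ((cmod (f (cis t)))\<^sup>2) = f (cis t) * cnj (f (cis t))" for t
    by (rule complex_norm_square)
  ultimately have "((\<lambda>t. f (cis t) * cnj (f (cis t))) has_integral of_real I) {0..2*pi}" by simp
  then have "hardy_inner f f = of_real I / (2 * of_real pi)"
    unfolding hardy_inner_def by (simp add: integral_unique)
  then have "Re (hardy_inner f f) = I / (2 * pi)"
    by (metis Re_divide_of_real of_real_mult of_real_numeral Re_complex_of_real)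
  then have "I = 2 * pi * Re (hardy_inner f f)" by simp
  then show ?thesis using I by simp
qed

lemma poly_norm:
  fixes d :: "nat \<Rightarrow> complex"
  assumes dz: "\<And>k. k < j \<Longrightarrow> d k = 0"
  shows "Re (hardy_inner (\<lambda>z. \<Sum>k<N. d k * z^(k-j)) (\<lambda>z. \<Sum>k<N. d k * z^(k-j))) = (\<Sum>k<N. (cmod (d k))\<^sup>2)"
proof -
  define P where "P = (\<lambda>z::complex. \<Sum>k<N. d k * z^(k-j))"
  define Q where "Q = (\<lambda>z::complex. \<Sum>k<N. d k * z^k)"
  define G where "G k = (if k \<in> {..<N} then d k else 0)" for k
  have QP: "Q z = z^j * P z" for z
    unfolding Q_def P_def sum_distrib_left
  proof (rule sum.cong[OF refl])
    fix k assume "k \<in> {..<N}"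
    show "d k * z^k = z^j * (d k * z^(k-j))"
    proof (cases "k < j")
      case True then show ?thesis using dz by simp
    next
      case False
      then have "z^k = z^j * z^(k-j)" by (simp add: power_add[symmetric])
      then show ?thesis by simp
    qed
  qed
  have eqi: "hardy_inner P P = hardy_inner Q Q"
    unfolding hardy_inner_def
  proof -
    have "P (cis t) * cnj (P (cis t)) = Q (cis t) * cnj (Q (cis t))" for t
    proof -
      have "cis t ^ j * cnj (cis t ^ j) = 1"
        using complex_norm_square[of "cis t ^ j"] by (simp add: norm_power)
      then show ?thesis unfolding QP by (simp add: mult_ac)
    qed
    then show "integral {0..2*pi} (\<lambda>t. P (cis t) * cnj (P (cis t))) / (2 * complex_of_real pi) =
      integral {0..2*pi} (\<lambda>t. Q (cis t) * cnj (Q (cis t))) / (2 * complex_of_real pi)" by simp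
  qed
  have sG: "summable (\<lambda>m. cmod (G m))"
    using sums_finite[of "{..<N}" "\<lambda>m. cmod (G m)"] unfolding G_def by (auto simp: sums_iff)
  have S: "(\<lambda>m. G m * laguerre 0 (m+1) (cis t)) sums Q (cis t)" for t
  proof -
    have "(\<lambda>m. if m \<in> {..<N} then d m * cis t ^ m else 0) sums Q (cis t)"
      unfolding Q_def by (rule sums_If_finite_set) simp
    moreover have "(\<lambda>m. G m * laguerre 0 (m+1) (cis t)) = (\<lambda>m. if m \<in> {..<N} then d m * cis t ^ m else 0)"
      unfolding lag0 G_def by (auto simp: fun_eq_iff)
    ultimately show ?thesis by simp
  qed
  have z0: "cmod (0::complex) < 1" by simp
  have "(\<lambda>m. (cmod (G m))\<^sup>2) sums Re (hardy_inner Q Q)" by (rule series_norm2(1)[OF z0 sG S])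
  moreover have "(\<lambda>m. (cmod (G m))\<^sup>2) sums (\<Sum>k<N. (cmod (d k))\<^sup>2)"
  proof -
    have "(\<lambda>m. if m \<in> {..<N} then (cmod (d m))\<^sup>2 else 0) sums (\<Sum>k<N. (cmod (d k))\<^sup>2)"
      by (rule sums_If_finite_set) simp
    moreover have "(\<lambda>m. (cmod (G m))\<^sup>2) = (\<lambda>m. if m \<in> {..<N} then (cmod (d m))\<^sup>2 else 0)"
      unfolding G_def by (auto simp: fun_eq_iff)
    ultimately show ?thesis by simp
  qed
  ultimately show ?thesis using eqi unfolding P_def[symmetric] by (simp add: sums_iff)
qed

lemma cont_circ:
  assumes f: "f holomorphic_on ball 0 R" and R: "R > 1"
  shows "continuous_on UNIV (\<lambda>t. f (cis t))"
proof (rule continuous_on_compose2[OF holomorphic_on_imp_continuous_on[OF f]])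
  show "continuous_on UNIV cis" by (intro continuous_intros)
  show "cis ` UNIV \<subseteq> ball 0 R" using R by auto
qed

lemma sa_pos: "cmod a < 1 \<Longrightarrow> sa a > 0"
  unfolding sa_def by (simp add: abs_square_less_1)

lemma gM_lower:
  assumes a: "cmod a < 1" and w: "cmod w = 1"
  shows "cmod (gM a w) \<ge> sa a / (1 + cmod a)"
proof -
  have nz: "1 + cnj a * w \<noteq> 0" using den2_nz[OF a, of w] RM_gt[OF a] w by simp
  have "cmod (1 + cnj a * w) \<le> 1 + cmod a"
    using norm_triangle_ineq[of 1 "cnj a * w"] w by (simp add: norm_mult)
  then have "sa a / (1 + cmod a) \<le> sa a / cmod (1 + cnj a * w)"
    by (intro divide_left_mono) (use sa_pos[OF a] nz in \<open>auto intro!: mult_pos_pos add_pos_nonneg\<close>)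
  also have "\<dots> = cmod (gM a w)" unfolding gM_def using sa_pos[OF a]
    by (simp add: norm_divide)
  finally show ?thesis .
qed

lemma W1:
  fixes a :: complex and \<sigma> :: nat and h :: "nat \<Rightarrow> complex \<Rightarrow> complex" and H :: "nat \<Rightarrow> real"
    and P :: "complex \<Rightarrow> complex"
  assumes a: "cmod a < 1"
    and hh: "\<And>j. h j holomorphic_on ball 0 (RM a)"
    and hP: "\<And>w. w \<in> ball 0 (RM a) \<Longrightarrow>
        (deriv^^\<sigma>) (\<lambda>w. gM a w * P (phM a w)) w = (\<Sum>j\<le>\<sigma>. h j w * (deriv^^j) P (phM a w))"
    and hb: "\<And>j w. cmod w = 1 \<Longrightarrow> cmod (h j w) \<le> H j"
    and P: "P holomorphic_on UNIV"
  shows "Re (hardy_inner ((deriv^^\<sigma>) (\<lambda>w. gM a w * P (phM a w))) ((deriv^^\<sigma>) (\<lambda>w. gM a w * P (phM a w))))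
     \<le> (real \<sigma> + 1) / (sa a / (1 + cmod a))\<^sup>2 *
        (\<Sum>j\<le>\<sigma>. (H j)\<^sup>2 * Re (hardy_inner ((deriv^^j) P) ((deriv^^j) P)))"
proof -
  define \<mu> where "\<mu> = sa a / (1 + cmod a)"
  have mu: "\<mu> > 0" unfolding \<mu>_def using sa_pos[OF a] by (simp add: add_pos_nonneg)
  define F where "F = (deriv^^\<sigma>) (\<lambda>w. gM a w * P (phM a w))"
  define V where "V j = (\<lambda>w. gM a w * (deriv^^j) P (phM a w))" for j
  have R1: "RM a > 1" by (rule RM_gt[OF a])
  have Pj: "(deriv^^j) P holomorphic_on UNIV" for j by (rule holomorphic_higher_deriv[OF P open_UNIV])
  have Vh: "V j holomorphic_on ball 0 (RM a)" for j unfolding V_def by (rule U_hol[OF a Pj])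
  have Fh: "F holomorphic_on ball 0 (RM a)" unfolding F_def
    by (rule holomorphic_higher_deriv[OF U_hol[OF a P] open_ball])
  have H0: "H j \<ge> 0" for j using hb[of 1 j] by (meson norm_ge_zero norm_one order_trans)
  have IF: "((\<lambda>t. (cmod (F (cis t)))\<^sup>2) has_integral (2*pi * Re (hardy_inner F F))) {0..2*pi}"
    by (rule hardy_re[OF cont_circ[OF Fh R1]])
  have IV: "((\<lambda>t. (cmod (V j (cis t)))\<^sup>2) has_integral (2*pi * Re (hardy_inner ((deriv^^j) P) ((deriv^^j) P)))) {0..2*pi}" for j
    using hardy_re[OF cont_circ[OF Vh R1], of j] U_iso[OF a Pj, of j] unfolding V_def by simp
  have IR: "((\<lambda>t. (real \<sigma> + 1) / \<mu>\<^sup>2 * (\<Sum>j\<le>\<sigma>. (H j)\<^sup>2 * (cmod (V j (cis t)))\<^sup>2)) has_integral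
      ((real \<sigma> + 1) / \<mu>\<^sup>2 * (\<Sum>j\<le>\<sigma>. (H j)\<^sup>2 * (2*pi * Re (hardy_inner ((deriv^^j) P) ((deriv^^j) P)))))) {0..2*pi}"
    by (intro has_integral_mult_right has_integral_sum IV) auto
  have pw: "(cmod (F (cis t)))\<^sup>2 \<le> (real \<sigma> + 1) / \<mu>\<^sup>2 * (\<Sum>j\<le>\<sigma>. (H j)\<^sup>2 * (cmod (V j (cis t)))\<^sup>2)" for t
  proof -
    define w where "w = cis t"
    have w1: "cmod w = 1" unfolding w_def by simp
    have wb: "w \<in> ball 0 (RM a)" using w1 R1 by simp
    define x where "x j = h j w * (deriv^^j) P (phM a w)" for j
    have Fw: "F w = (\<Sum>j\<le>\<sigma>. x j)" unfolding F_def x_def using hP[OF wb] .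
    have xj: "cmod (x j) \<le> H j * cmod (V j w) / \<mu>" for j
    proof -
      have g: "\<mu> \<le> cmod (gM a w)" unfolding \<mu>_def by (rule gM_lower[OF a w1])
      have "cmod ((deriv^^j) P (phM a w)) * \<mu> \<le> cmod ((deriv^^j) P (phM a w)) * cmod (gM a w)"
        by (rule mult_left_mono[OF g]) simp
      then have "cmod ((deriv^^j) P (phM a w)) \<le> cmod (V j w) / \<mu>"
        unfolding V_def using mu by (simp add: field_simps norm_mult)
      then have "cmod (h j w) * cmod ((deriv^^j) P (phM a w)) \<le> H j * (cmod (V j w) / \<mu>)"
        by (intro mult_mono hb[OF w1]) (auto intro: H0)
      then show ?thesis unfolding x_def by (simp add: norm_mult)
    qed
    have "(cmod (F w))\<^sup>2 \<le> (\<Sum>j\<le>\<sigma>. cmod (x j))\<^sup>2"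
      unfolding Fw by (intro power_mono norm_sum) simp
    also have "\<dots> \<le> (\<Sum>j\<le>\<sigma>. (cmod (x j))\<^sup>2) * real (card {..\<sigma>})"
      by (rule sum_squared_le_sum_of_squares)
    also have "\<dots> = (real \<sigma> + 1) * (\<Sum>j\<le>\<sigma>. (cmod (x j))\<^sup>2)" by simp
    also have "\<dots> \<le> (real \<sigma> + 1) * (\<Sum>j\<le>\<sigma>. (H j * cmod (V j w) / \<mu>)\<^sup>2)"
      by (intro mult_left_mono sum_mono power_mono xj) auto
    also have "\<dots> = (real \<sigma> + 1) / \<mu>\<^sup>2 * (\<Sum>j\<le>\<sigma>. (H j)\<^sup>2 * (cmod (V j w))\<^sup>2)"
      using mu by (simp add: power_divide power_mult_distrib sum_divide_distrib[symmetric])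
    finally show ?thesis unfolding w_def .
  qed
  have "2*pi * Re (hardy_inner F F) \<le> (real \<sigma> + 1) / \<mu>\<^sup>2 * (\<Sum>j\<le>\<sigma>. (H j)\<^sup>2 * (2*pi * Re (hardy_inner ((deriv^^j) P) ((deriv^^j) P))))"
    by (rule has_integral_le[OF IF IR pw])
  also have "\<dots> = 2*pi * ((real \<sigma> + 1) / \<mu>\<^sup>2 * (\<Sum>j\<le>\<sigma>. (H j)\<^sup>2 * Re (hardy_inner ((deriv^^j) P) ((deriv^^j) P))))"
    by (simp add: sum_distrib_left mult_ac)
  finally have "2*pi * Re (hardy_inner F F) \<le> 2*pi * ((real \<sigma> + 1) / \<mu>\<^sup>2 * (\<Sum>j\<le>\<sigma>. (H j)\<^sup>2 * Re (hardy_inner ((deriv^^j) P) ((deriv^^j) P))))" .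
  then have "Re (hardy_inner F F) \<le> (real \<sigma> + 1) / \<mu>\<^sup>2 * (\<Sum>j\<le>\<sigma>. (H j)\<^sup>2 * Re (hardy_inner ((deriv^^j) P) ((deriv^^j) P)))"
    by (rule mult_left_le_imp_le) simp
  then show ?thesis unfolding F_def \<mu>_def .
qed

lemma fact_ratio: "2 * s \<le> m \<Longrightarrow> (real m / 2) ^ s \<le> fact m / fact (m - s)"
proof (induction s)
  case 0 then show ?case by simp
next
  case (Suc s)
  then have IH: "(real m / 2) ^ s \<le> fact m / fact (m - s)" by simp
  have ms: "m - s = Suc (m - Suc s)" using Suc.prems by simp
  have f: "fact (m - s) = real (m - s) * fact (m - Suc s)" unfolding ms by simp
  have "fact m / fact (m - Suc s) = fact m / fact (m - s) * real (m - s)"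
    unfolding f using Suc.prems by (simp add: field_simps)
  moreover have "real m / 2 \<le> real (m - s)" using Suc.prems by (simp add: of_nat_diff)
  ultimately show ?case
    by (simp only: power_Suc2) (rule mult_mono[OF IH]; simp)
qed

lemma weight_ineq:
  fixes x :: real
  assumes \<sigma>: "\<sigma> > 0" and n: "1 \<le> n" "n \<le> m" and x: "x \<ge> 0"
  shows "(real n)^(2*\<sigma>) * x \<le> (2 * real \<sigma>)^(2*\<sigma>) * x + 4^\<sigma> * (if \<sigma> \<le> m then (fact m / fact (m - \<sigma>))\<^sup>2 * x else 0)"
proof (cases "m < 2 * \<sigma>")
  case True
  have "(real n)^(2*\<sigma>) \<le> (2 * real \<sigma>)^(2*\<sigma>)"
    by (rule power_mono) (use True n in auto)
  then have "(real n)^(2*\<sigma>) * x \<le> (2 * real \<sigma>)^(2*\<sigma>) * x" by (rule mult_right_mono[OF _ x])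
  moreover have "0 \<le> 4^\<sigma> * (if \<sigma> \<le> m then (fact m / fact (m - \<sigma>))\<^sup>2 * x else 0)"
    using x by auto
  ultimately show ?thesis by linarith
next
  case False
  then have sm: "\<sigma> \<le> m" by simp
  define r :: real where "r = fact m / fact (m - \<sigma>)"
  have "(real n)^\<sigma> \<le> (real m)^\<sigma>" by (rule power_mono) (use n in auto)
  also have "\<dots> = 2^\<sigma> * (real m / 2)^\<sigma>" by (simp add: power_divide)
  also have "\<dots> \<le> 2^\<sigma> * r" 
    by (rule mult_left_mono) (use fact_ratio[of \<sigma> m] False in \<open>auto simp: r_def\<close>)
  finally have "(real n)^\<sigma> \<le> 2^\<sigma> * r" .
  then have "((real n)^\<sigma>)\<^sup>2 \<le> (2^\<sigma> * r)\<^sup>2" by (rule power_mono) simp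
  then have "(real n)^(2*\<sigma>) \<le> 4^\<sigma> * r\<^sup>2"
  proof -
    have "(4::real)^\<sigma> = 2^(2*\<sigma>)" by (simp add: power_mult)
    then show ?thesis using \<open>((real n)^\<sigma>)\<^sup>2 \<le> (2^\<sigma> * r)\<^sup>2\<close>
      by (simp add: power_mult_distrib power_mult[symmetric] mult.commute)
  qed
  then have "(real n)^(2*\<sigma>) * x \<le> 4^\<sigma> * r\<^sup>2 * x" by (rule mult_right_mono[OF _ x])
  moreover have "0 \<le> (2 * real \<sigma>)^(2*\<sigma>) * x" using x by simp
  ultimately show ?thesis using sm unfolding r_def by simp
qed

lemma W2:
  fixes a :: complex and \<sigma> n :: nat and P :: "complex \<Rightarrow> complex"
  assumes a: "cmod a < 1" and \<sigma>: "\<sigma> > 0" and n: "n \<ge> 1" and P: "P holomorphic_on UNIV"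
  defines "F \<equiv> (\<lambda>w. gM a w * P (phM a w))"
  defines "E \<equiv> (\<lambda>z. P z - (\<Sum>l=1..n. hardy_inner P (laguerre a l) * laguerre a l z))"
  shows "(real n)^(2*\<sigma>) * Re (hardy_inner E E) \<le>
           (2 * real \<sigma>)^(2*\<sigma>) * Re (hardy_inner P P) + 4^\<sigma> * Re (hardy_inner ((deriv^^\<sigma>) F) ((deriv^^\<sigma>) F))"
    and "Re (hardy_inner E E) \<ge> 0"
proof -
  define Fc where "Fc m = (deriv^^m) F 0 / fact m" for m
  note U = U_expand[OF a P, folded F_def, folded Fc_def]
  have coeff: "hardy_inner P (laguerre a (Suc l)) = Fc l" for l
    using series_coeff[OF a U(1) U(2), of l] by simp
  have sumeq: "(\<Sum>l=1..n. hardy_inner P (laguerre a l) * laguerre a l z) = (\<Sum>m<n. Fc m * laguerre a (m+1) z)" for z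
    using sum.atLeast1_atMost_eq[of "\<lambda>l. hardy_inner P (laguerre a l) * laguerre a l z" n]
    by (simp add: coeff)
  define G where "G m = (if m < n then 0 else Fc m)" for m
  have SE: "(\<lambda>m. G m * laguerre a (m+1) (cis t)) sums E (cis t)" for t
  proof -
    have A: "(\<lambda>m. Fc m * laguerre a (m+1) (cis t)) sums P (cis t)" by (rule U(2))
    have B: "(\<lambda>m. if m \<in> {..<n} then Fc m * laguerre a (m+1) (cis t) else 0) sums (\<Sum>m<n. Fc m * laguerre a (m+1) (cis t))"
      by (rule sums_If_finite_set) simp
    have "(\<lambda>m. Fc m * laguerre a (m+1) (cis t) - (if m \<in> {..<n} then Fc m * laguerre a (m+1) (cis t) else 0))
        sums (P (cis t) - (\<Sum>m<n. Fc m * laguerre a (m+1) (cis t)))"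
      by (rule sums_diff[OF A B])
    moreover have "(\<lambda>m. Fc m * laguerre a (m+1) (cis t) - (if m \<in> {..<n} then Fc m * laguerre a (m+1) (cis t) else 0))
        = (\<lambda>m. G m * laguerre a (m+1) (cis t))"
      by (auto simp: G_def fun_eq_iff)
    moreover have "E (cis t) = P (cis t) - (\<Sum>m<n. Fc m * laguerre a (m+1) (cis t))"
      unfolding E_def sumeq ..
    ultimately show ?thesis by simp
  qed
  have sG: "summable (\<lambda>m. cmod (G m))"
    by (rule summable_comparison_test[OF _ U(1)]) (auto simp: G_def)
  note nE = series_norm2(1)[OF a sG SE]
  note nP = series_norm2(1)[OF a U(1) U(2)]
  define Fs where "Fs = (deriv^^\<sigma>) F"
  have Fh: "F holomorphic_on ball 0 (RM a)" unfolding F_def by (rule U_hol[OF a P])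
  have Fsh: "Fs holomorphic_on ball 0 (RM a)" unfolding Fs_def
    by (rule holomorphic_higher_deriv[OF Fh open_ball])
  note HE = holo_expand[OF Fsh RM_gt[OF a]]
  define Dc where "Dc i = (deriv^^i) Fs 0 / fact i" for i
  have SD: "(\<lambda>i. Dc i * laguerre 0 (i+1) (cis t)) sums Fs (cis t)" for t
    unfolding lag0 Dc_def using HE(2)[of "cis t"] by simp
  have z0: "cmod (0::complex) < 1" by simp
  have nD: "(\<lambda>i. (cmod (Dc i))\<^sup>2) sums Re (hardy_inner Fs Fs)"
    by (rule series_norm2(1)[OF z0 _ SD]) (use HE(1) in \<open>simp add: Dc_def\<close>)
  have Dc_eq: "Dc (m - \<sigma>) = Fc m * (fact m / fact (m - \<sigma>))" if "\<sigma> \<le> m" for m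
  proof -
    have "(deriv^^(m - \<sigma>)) Fs = (deriv^^(m - \<sigma>) \<circ> deriv^^\<sigma>) F"
      unfolding Fs_def by simp
    also have "\<dots> = (deriv^^(m - \<sigma> + \<sigma>)) F" by (simp only: funpow_add)
    also have "m - \<sigma> + \<sigma> = m" using that by simp
    finally have "(deriv^^(m - \<sigma>)) Fs = (deriv^^m) F" .
    then show ?thesis unfolding Dc_def Fc_def by simp
  qed
  define T where "T m = (if \<sigma> \<le> m then (cmod (Dc (m - \<sigma>)))\<^sup>2 else 0)" for m
  have nT: "T sums Re (hardy_inner Fs Fs)"
  proof -
    have "(\<lambda>i. T (i + \<sigma>)) sums Re (hardy_inner Fs Fs)" unfolding T_def using nD by simp
    moreover have "(\<Sum>i<\<sigma>. T i) = 0" unfolding T_def by simp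
    ultimately show ?thesis using sums_iff_shift[of T \<sigma> "Re (hardy_inner Fs Fs)"] by simp
  qed
  have pw: "(real n)^(2*\<sigma>) * (cmod (G m))\<^sup>2 \<le> (2 * real \<sigma>)^(2*\<sigma>) * (cmod (Fc m))\<^sup>2 + 4^\<sigma> * T m" for m
  proof (cases "m < n")
    case True
    have "0 \<le> (2 * real \<sigma>)^(2*\<sigma>) * (cmod (Fc m))\<^sup>2 + 4^\<sigma> * T m" by (simp add: T_def)
    then show ?thesis using True by (simp add: G_def)
  next
    case False
    define r :: real where "r = fact m / fact (m - \<sigma>)"
    have nD: "cmod (Dc (m - \<sigma>)) = cmod (Fc m) * r" if "\<sigma> \<le> m"
      using Dc_eq[OF that] unfolding r_def by (simp add: norm_mult norm_divide norm_fact)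
    have "T m = (if \<sigma> \<le> m then r\<^sup>2 * (cmod (Fc m))\<^sup>2 else 0)"
      unfolding T_def using nD by (simp add: power_mult_distrib mult.commute)
    then have Teq: "T m = (if \<sigma> \<le> m then (fact m / fact (m - \<sigma>))\<^sup>2 * (cmod (Fc m))\<^sup>2 else 0)"
      unfolding r_def .
    have Gm: "G m = Fc m" using False by (simp add: G_def)
    have nm: "n \<le> m" using False by simp
    show ?thesis unfolding Gm Teq by (rule weight_ineq[OF \<sigma> n nm]) simp
  qed
  have "(real n)^(2*\<sigma>) * Re (hardy_inner E E) \<le> (2 * real \<sigma>)^(2*\<sigma>) * Re (hardy_inner P P) + 4^\<sigma> * Re (hardy_inner Fs Fs)"
    by (rule sums_le[OF pw sums_mult[OF nE] sums_add[OF sums_mult[OF nP] sums_mult[OF nT]]])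
  then show "(real n)^(2*\<sigma>) * Re (hardy_inner E E) \<le>
           (2 * real \<sigma>)^(2*\<sigma>) * Re (hardy_inner P P) + 4^\<sigma> * Re (hardy_inner ((deriv^^\<sigma>) F) ((deriv^^\<sigma>) F))"
    unfolding Fs_def .
  show "Re (hardy_inner E E) \<ge> 0"
    by (rule sums_le[OF _ sums_zero nE]) simp
qed

lemma tf_eq:
  assumes cN: "\<And>k. k \<ge> N \<Longrightarrow> c k = 0"
  shows "taylor_fun c = (\<lambda>z. \<Sum>k<N. c k * z^k)"
proof
  fix z
  show "taylor_fun c z = (\<Sum>k<N. c k * z^k)"
    unfolding taylor_fun_def by (rule suminf_finite) (auto simp: cN)
qed

lemma weight_le:
  assumes "j \<le> \<sigma>"
  shows "real (ffn k j) \<le> 1 + real k ^ \<sigma>"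
proof -
  have "real (ffn k j) \<le> real k ^ j" using ffn_le[of k j] by (metis of_nat_le_iff of_nat_power)
  also have "\<dots> \<le> 1 + real k ^ \<sigma>"
  proof (cases "k = 0")
    case True then show ?thesis by (cases j) auto
  next
    case False
    then have "real k ^ j \<le> real k ^ \<sigma>" by (intro power_increasing assms) simp
    then show ?thesis by simp
  qed
  finally show ?thesis .
qed

lemma W3:
  assumes cN: "\<And>k. k \<ge> N \<Longrightarrow> c k = 0" and j: "j \<le> \<sigma>"
  shows "Re (hardy_inner ((deriv^^j) (taylor_fun c)) ((deriv^^j) (taylor_fun c)))
     \<le> (\<Sum>k. (cmod ((1 + of_nat k ^ \<sigma>) * c k))\<^sup>2)"
proof -
  define d where "d k = c k * of_nat (ffn k j)" for k
  have dz: "d k = 0" if "k < j" for k unfolding d_def using ffn_zero[OF that] by simp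
  have "(deriv^^j) (taylor_fun c) = (\<lambda>z. \<Sum>k<N. d k * z^(k-j))"
    using poly_deriv[of j c N] tf_eq[OF cN] unfolding d_def by simp
  then have "Re (hardy_inner ((deriv^^j) (taylor_fun c)) ((deriv^^j) (taylor_fun c))) = (\<Sum>k<N. (cmod (d k))\<^sup>2)"
    using poly_norm[of j d N, OF dz] by simp
  also have "\<dots> \<le> (\<Sum>k<N. (cmod ((1 + of_nat k ^ \<sigma>) * c k))\<^sup>2)"
  proof (rule sum_mono)
    fix k
    have "cmod (d k) = cmod (c k) * real (ffn k j)" unfolding d_def by (simp add: norm_mult)
    also have "\<dots> \<le> cmod (c k) * (1 + real k ^ \<sigma>)" by (rule mult_left_mono[OF weight_le[OF j]]) simp
    also have "\<dots> = cmod ((1 + of_nat k ^ \<sigma>) * c k)"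
    proof -
      have "(1 + of_nat k ^ \<sigma> :: complex) = of_real (1 + real k ^ \<sigma>)" by simp
      then have "cmod (1 + of_nat k ^ \<sigma> :: complex) = 1 + real k ^ \<sigma>"
        by (metis abs_of_nonneg norm_of_real add_nonneg_nonneg zero_le_one zero_le_power of_nat_0_le_iff)
      then show ?thesis by (simp add: norm_mult)
    qed
    finally show "(cmod (d k))\<^sup>2 \<le> (cmod ((1 + of_nat k ^ \<sigma>) * c k))\<^sup>2"
      by (rule power_mono) simp
  qed
  also have "\<dots> = (\<Sum>k. (cmod ((1 + of_nat k ^ \<sigma>) * c k))\<^sup>2)"
    by (rule suminf_finite[symmetric]) (auto simp: cN)
  finally show ?thesis .
qed

definition Kc :: "complex \<Rightarrow> nat \<Rightarrow> (nat \<Rightarrow> real) \<Rightarrow> real" where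
  "Kc a \<sigma> H = (2 * real \<sigma>)^(2*\<sigma>) + 4^\<sigma> * ((real \<sigma> + 1) / (sa a / (1 + cmod a))\<^sup>2 * (\<Sum>j\<le>\<sigma>. (H j)\<^sup>2))"

lemma poly_case:
  fixes a :: complex and \<sigma> n N :: nat and c :: "nat \<Rightarrow> complex"
    and h :: "nat \<Rightarrow> complex \<Rightarrow> complex" and H :: "nat \<Rightarrow> real"
  assumes a: "cmod a < 1" and \<sigma>: "\<sigma> > 0" and n: "n \<ge> 1"
    and hh: "\<And>j. h j holomorphic_on ball 0 (RM a)"
    and hP: "\<And>P w. P holomorphic_on UNIV \<Longrightarrow> w \<in> ball 0 (RM a) \<Longrightarrow>
        (deriv^^\<sigma>) (\<lambda>w. gM a w * P (phM a w)) w = (\<Sum>j\<le>\<sigma>. h j w * (deriv^^j) P (phM a w))"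
    and hb: "\<And>j w. cmod w = 1 \<Longrightarrow> cmod (h j w) \<le> H j"
    and cN: "\<And>k. k \<ge> N \<Longrightarrow> c k = 0"
  shows "(real n)^(2*\<sigma>) * (hardy_norm (\<lambda>z. taylor_fun c z
              - (\<Sum>l=1..n. hardy_inner (taylor_fun c) (laguerre a l) * laguerre a l z)))\<^sup>2
         \<le> Kc a \<sigma> H * (\<Sum>k. (cmod ((1 + of_nat k ^ \<sigma>) * c k))\<^sup>2)"
proof -
  define P where "P = taylor_fun c"
  define E where "E = (\<lambda>z. P z - (\<Sum>l=1..n. hardy_inner P (laguerre a l) * laguerre a l z))"
  define C2 where "C2 = (\<Sum>k. (cmod ((1 + of_nat k ^ \<sigma>) * c k))\<^sup>2)"
  define \<mu> where "\<mu> = sa a / (1 + cmod a)"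
  define F where "F = (\<lambda>w. gM a w * P (phM a w))"
  have Peq: "P = (\<lambda>z. \<Sum>k<N. c k * z^k)" unfolding P_def by (rule tf_eq[OF cN])
  have "(\<lambda>z. \<Sum>k<N. c k * z^k) holomorphic_on UNIV" by (intro holomorphic_intros)
  then have Pent: "P holomorphic_on UNIV" unfolding Peq .
  note w2 = W2[OF a \<sigma> n Pent, folded E_def F_def]
  have RP: "Re (hardy_inner P P) \<le> C2" using W3[OF cN, where j=0 and \<sigma>=\<sigma>] unfolding C2_def P_def by simp
  have Rj: "Re (hardy_inner ((deriv^^j) P) ((deriv^^j) P)) \<le> C2" if "j \<le> \<sigma>" for j
    using W3[OF cN that] unfolding C2_def P_def .
  have w1: "Re (hardy_inner ((deriv^^\<sigma>) F) ((deriv^^\<sigma>) F)) \<le>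
      (real \<sigma> + 1) / \<mu>\<^sup>2 * (\<Sum>j\<le>\<sigma>. (H j)\<^sup>2 * Re (hardy_inner ((deriv^^j) P) ((deriv^^j) P)))"
    unfolding F_def \<mu>_def by (rule W1[OF a hh hP[OF Pent] hb Pent])
  have "(\<Sum>j\<le>\<sigma>. (H j)\<^sup>2 * Re (hardy_inner ((deriv^^j) P) ((deriv^^j) P))) \<le> (\<Sum>j\<le>\<sigma>. (H j)\<^sup>2 * C2)"
    by (intro sum_mono mult_left_mono Rj) auto
  also have "\<dots> = (\<Sum>j\<le>\<sigma>. (H j)\<^sup>2) * C2" by (simp add: sum_distrib_right)
  finally have s1: "(\<Sum>j\<le>\<sigma>. (H j)\<^sup>2 * Re (hardy_inner ((deriv^^j) P) ((deriv^^j) P))) \<le> (\<Sum>j\<le>\<sigma>. (H j)\<^sup>2) * C2" .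
  have q0: "(real \<sigma> + 1) / \<mu>\<^sup>2 \<ge> 0" by simp
  have fs: "Re (hardy_inner ((deriv^^\<sigma>) F) ((deriv^^\<sigma>) F)) \<le> (real \<sigma> + 1) / \<mu>\<^sup>2 * ((\<Sum>j\<le>\<sigma>. (H j)\<^sup>2) * C2)"
    using w1 mult_left_mono[OF s1 q0] by linarith
  have "(real n)^(2*\<sigma>) * Re (hardy_inner E E) \<le>
      (2 * real \<sigma>)^(2*\<sigma>) * C2 + 4^\<sigma> * ((real \<sigma> + 1) / \<mu>\<^sup>2 * ((\<Sum>j\<le>\<sigma>. (H j)\<^sup>2) * C2))"
  proof -
    have "(2 * real \<sigma>)^(2*\<sigma>) * Re (hardy_inner P P) \<le> (2 * real \<sigma>)^(2*\<sigma>) * C2"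
      by (rule mult_left_mono[OF RP]) simp
    moreover have "(4::real)^\<sigma> * Re (hardy_inner ((deriv^^\<sigma>) F) ((deriv^^\<sigma>) F)) \<le>
        4^\<sigma> * ((real \<sigma> + 1) / \<mu>\<^sup>2 * ((\<Sum>j\<le>\<sigma>. (H j)\<^sup>2) * C2))"
      by (rule mult_left_mono[OF fs]) simp
    ultimately show ?thesis using w2(1) by linarith
  qed
  also have "\<dots> = Kc a \<sigma> H * C2" unfolding Kc_def \<mu>_def by (simp add: algebra_simps)
  finally have main: "(real n)^(2*\<sigma>) * Re (hardy_inner E E) \<le> Kc a \<sigma> H * C2" .
  have "(hardy_norm E)\<^sup>2 = Re (hardy_inner E E)"
    unfolding hardy_norm_def using w2(2) by simp
  then show ?thesis using main unfolding E_def P_def C2_def by simp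
qed

definition ctr :: "(nat \<Rightarrow> complex) \<Rightarrow> nat \<Rightarrow> nat \<Rightarrow> complex" where
  "ctr c N k = (if k < N then c k else 0)"

lemma l1_summable:
  assumes \<sigma>: "\<sigma> > 0" and c: "in_H2_sigma \<sigma> c"
  shows "summable (\<lambda>k. cmod (c k))"
proof (rule summable_comparison_test)
  define W where "W k = (cmod ((1 + of_nat k ^ \<sigma>) * c k))\<^sup>2" for k
  have sW: "summable W" using c unfolding in_H2_sigma_def W_def .
  have si: "summable (\<lambda>k. inverse (real (Suc k) ^ 2))"
    using inverse_power_summable[of 2, where 'a=real] summable_Suc_iff[of "\<lambda>n. inverse (real n ^ 2)"] by simp
  show "summable (\<lambda>k. (inverse (real (Suc k) ^ 2) + W k) / 2)"
    by (intro summable_divide summable_add si sW)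
  show "\<exists>N. \<forall>k\<ge>N. norm (cmod (c k)) \<le> (inverse (real (Suc k) ^ 2) + W k) / 2"
  proof (intro exI allI impI)
    fix k :: nat
    define x where "x = inverse (real (Suc k))"
    define y where "y = real (Suc k) * cmod (c k)"
    have xy: "x * y = cmod (c k)" unfolding x_def y_def by simp
    have "2 * x * y \<le> x\<^sup>2 + y\<^sup>2" by (rule sum_squares_bound)
    moreover have "y\<^sup>2 \<le> W k"
    proof -
      have k: "real (Suc k) \<le> 1 + real k ^ \<sigma>"
      proof (cases "k = 0")
        case False
        then have "k \<le> k ^ \<sigma>" using \<sigma> by (intro self_le_power) auto
        then have "real k \<le> real k ^ \<sigma>" by (metis of_nat_le_iff of_nat_power)
        then show ?thesis by simp
      qed simp
      have c1: "cmod (1 + of_nat k ^ \<sigma> :: complex) = 1 + real k ^ \<sigma>"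
      proof -
        have "(1 + of_nat k ^ \<sigma> :: complex) = of_real (1 + real k ^ \<sigma>)" by simp
        then show ?thesis by (metis abs_of_nonneg norm_of_real add_nonneg_nonneg zero_le_one zero_le_power of_nat_0_le_iff)
      qed
      have "y \<le> cmod ((1 + of_nat k ^ \<sigma>) * c k)"
        unfolding y_def norm_mult c1 by (rule mult_right_mono[OF k]) simp
      then show ?thesis unfolding W_def by (rule power_mono) (simp add: y_def)
    qed
    moreover have "x\<^sup>2 = inverse (real (Suc k) ^ 2)" unfolding x_def by (simp add: power_inverse)
    ultimately show "norm (cmod (c k)) \<le> (inverse (real (Suc k) ^ 2) + W k) / 2"
      using xy by simp
  qed
qed

lemma tf_ctr: "taylor_fun (ctr c N) z = (\<Sum>k<N. c k * z^k)"
proof -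
  have "taylor_fun (ctr c N) z = (\<Sum>k<N. ctr c N k * z^k)"
    using tf_eq[of N "ctr c N"] by (simp add: ctr_def)
  then show ?thesis by (simp add: ctr_def)
qed

lemma unif_T:
  assumes sc: "summable (\<lambda>k. cmod (c k))"
  shows "uniform_limit UNIV (\<lambda>N t. taylor_fun (ctr c N) (cis t)) (\<lambda>t. taylor_fun c (cis t)) sequentially"
proof -
  have "uniform_limit UNIV (\<lambda>N t. \<Sum>k<N. c k * cis t ^ k) (\<lambda>t. suminf (\<lambda>k. c k * cis t ^ k)) sequentially"
    by (rule Weierstrass_m_test[OF _ sc]) (simp add: norm_mult norm_power)
  moreover have "(\<lambda>N t. taylor_fun (ctr c N) (cis t)) = (\<lambda>N t. \<Sum>k<N. c k * cis t ^ k)"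
    by (simp add: tf_ctr)
  ultimately show ?thesis unfolding taylor_fun_def by simp
qed

lemma cont_T:
  assumes sc: "summable (\<lambda>k. cmod (c k))"
  shows "continuous_on UNIV (\<lambda>t. taylor_fun c (cis t))"
proof (rule uniform_limit_theorem[OF _ unif_T[OF sc]])
  show "\<forall>\<^sub>F N in sequentially. continuous_on UNIV (\<lambda>t. taylor_fun (ctr c N) (cis t))"
    unfolding tf_ctr by (intro always_eventually allI continuous_intros)
qed simp

lemma bounded_circ:
  assumes "continuous_on UNIV (\<lambda>t. f (cis t))"
  shows "bounded ((\<lambda>t. f (cis t)) ` S)"
proof -
  have "compact ((\<lambda>t. f (cis t)) ` {0..2*pi})"
    by (rule compact_continuous_image[OF continuous_on_subset[OF assms] compact_Icc]) simp
  then have b: "bounded ((\<lambda>t. f (cis t)) ` {0..2*pi})" by (rule compact_imp_bounded)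
  have "(\<lambda>t. f (cis t)) ` S \<subseteq> (\<lambda>t. f (cis t)) ` {0..2*pi}"
  proof
    fix y assume "y \<in> (\<lambda>t. f (cis t)) ` S"
    then obtain t where y: "y = f (cis t)" by auto
    define t' where "t' = t - 2*pi * of_int \<lfloor>t / (2*pi)\<rfloor>"
    have "cis t' = cis t / cis (2*pi * of_int \<lfloor>t / (2*pi)\<rfloor>)" unfolding t'_def cis_divide ..
    also have "cis (2*pi * of_int \<lfloor>t / (2*pi)\<rfloor>) = 1" by (rule cis_multiple_2pi) simp
    finally have "cis t' = cis t" by simp
    moreover have "t' \<in> {0..2*pi}"
    proof -
      define m where "m = real_of_int \<lfloor>t / (2*pi)\<rfloor>"
      have f1: "m \<le> t / (2*pi)" "t / (2*pi) < m + 1" unfolding m_def by linarith+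
      have p: "2*pi > 0" by simp
      have g1: "m * (2*pi) \<le> t" using f1(1) p by (simp only: le_divide_eq)
      have g2: "t < (m + 1) * (2*pi)" using f1(2) p by (simp only: divide_less_eq)
      show ?thesis unfolding t'_def m_def[symmetric] using g1 g2 by (auto simp: algebra_simps)
    qed
    ultimately show "y \<in> (\<lambda>t. f (cis t)) ` {0..2*pi}" using y by (metis image_eqI)
  qed
  then show ?thesis using b bounded_subset by blast
qed

lemma const_ul:
  assumes "(s \<longlongrightarrow> s0) F"
  shows "uniform_limit S (\<lambda>N t. s N) (\<lambda>t. s0) F"
proof (rule uniform_limitI)
  fix e :: real assume "e > 0"
  from tendstoD[OF assms this] show "\<forall>\<^sub>F N in F. \<forall>t\<in>S. dist (s N) s0 < e"
    by eventually_elim simp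
qed

lemma sum_ul:
  fixes f :: "'i \<Rightarrow> 'n \<Rightarrow> 'x \<Rightarrow> 'c::real_normed_vector"
  assumes "finite I" and "\<And>i. i \<in> I \<Longrightarrow> uniform_limit S (f i) (g i) F"
  shows "uniform_limit S (\<lambda>N t. \<Sum>i\<in>I. f i N t) (\<lambda>t. \<Sum>i\<in>I. g i t) F"
  using assms
proof (induction I rule: finite_induct)
  case empty
  show ?case by (simp add: uniform_limit_const)
next
  case (insert x I)
  have "uniform_limit S (\<lambda>N t. f x N t + (\<Sum>i\<in>I. f i N t)) (\<lambda>t. g x t + (\<Sum>i\<in>I. g i t)) F"
    by (rule uniform_limit_add) (use insert in auto)
  then show ?case using insert by simp
qed

lemma bounded_const_img: "bounded ((\<lambda>t. s0) ` S)"
  by (rule bounded_subset[of "{s0}"]) auto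

lemma cont_TN: "continuous_on UNIV (\<lambda>t. taylor_fun (ctr c N) (cis t))"
  unfolding tf_ctr by (intro continuous_intros)

lemma inner_conv:
  assumes sc: "summable (\<lambda>k. cmod (c k))" and hB: "continuous_on UNIV (\<lambda>t. B (cis t))"
  shows "(\<lambda>N. hardy_inner (taylor_fun (ctr c N)) B) \<longlonglongrightarrow> hardy_inner (taylor_fun c) B"
proof -
  have hB': "continuous_on UNIV (\<lambda>t. cnj (B (cis t)))" by (intro continuous_intros hB)
  have UL: "uniform_limit {0..2*pi} (\<lambda>N t. taylor_fun (ctr c N) (cis t) * cnj (B (cis t)))
      (\<lambda>t. taylor_fun c (cis t) * cnj (B (cis t))) sequentially"
    by (rule uniform_lim_mult[OF uniform_limit_on_subset[OF unif_T[OF sc]] uniform_limit_const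
          bounded_circ[OF cont_T[OF sc]] bounded_circ[of "\<lambda>z. cnj (B z)", OF hB']]) simp
  have cN: "continuous_on {0..2*pi} (\<lambda>t. taylor_fun (ctr c N) (cis t) * cnj (B (cis t)))" for N
    by (intro continuous_intros continuous_on_subset[OF cont_TN] continuous_on_subset[OF hB']) auto
  obtain I J where I: "\<And>N. ((\<lambda>t. taylor_fun (ctr c N) (cis t) * cnj (B (cis t))) has_integral I N) {0..2*pi}"
    and J: "((\<lambda>t. taylor_fun c (cis t) * cnj (B (cis t))) has_integral J) {0..2*pi}"
    and IJ: "I \<longlonglongrightarrow> J"
    using uniform_limit_integral[OF UL cN] by auto
  have "(\<lambda>N. I N / (2 * of_real pi)) \<longlonglongrightarrow> J / (2 * of_real pi)"
    by (intro tendsto_divide IJ tendsto_const) simp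
  moreover have "hardy_inner (taylor_fun (ctr c N)) B = I N / (2 * of_real pi)" for N
    unfolding hardy_inner_def using I[of N] by (simp add: integral_unique)
  moreover have "hardy_inner (taylor_fun c) B = J / (2 * of_real pi)"
    unfolding hardy_inner_def using J by (simp add: integral_unique)
  ultimately show ?thesis by simp
qed

lemma E_conv:
  fixes a :: complex and n :: nat
  assumes a: "cmod a < 1" and sc: "summable (\<lambda>k. cmod (c k))"
  defines "E \<equiv> (\<lambda>d z. taylor_fun d z - (\<Sum>l=1..n. hardy_inner (taylor_fun d) (laguerre a l) * laguerre a l z))"
  shows "(\<lambda>N. Re (hardy_inner (E (ctr c N)) (E (ctr c N)))) \<longlonglongrightarrow> Re (hardy_inner (E c) (E c))"
proof -
  have lc: "continuous_on UNIV (\<lambda>t. laguerre a l (cis t))" for l by (rule lag_cont[OF a])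
  have contE: "continuous_on UNIV (\<lambda>t. E d (cis t))" if "continuous_on UNIV (\<lambda>t. taylor_fun d (cis t))" for d
    unfolding E_def by (intro continuous_intros that lc)
  have cE: "continuous_on UNIV (\<lambda>t. E c (cis t))" by (rule contE[OF cont_T[OF sc]])
  have cEN: "continuous_on UNIV (\<lambda>t. E (ctr c N) (cis t))" for N by (rule contE[OF cont_TN])
  have trm: "uniform_limit {0..2*pi} (\<lambda>N t. hardy_inner (taylor_fun (ctr c N)) (laguerre a l) * laguerre a l (cis t))
       (\<lambda>t. hardy_inner (taylor_fun c) (laguerre a l) * laguerre a l (cis t)) sequentially" for l
    by (rule uniform_lim_mult[OF const_ul[OF inner_conv[OF sc lc]] uniform_limit_const
          bounded_const_img bounded_circ[OF lc]])
  have ULE: "uniform_limit {0..2*pi} (\<lambda>N t. E (ctr c N) (cis t)) (\<lambda>t. E c (cis t)) sequentially"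
    unfolding E_def
    by (rule uniform_limit_minus[OF uniform_limit_on_subset[OF unif_T[OF sc]] sum_ul[OF _ trm]]) auto
  have ULC: "uniform_limit {0..2*pi} (\<lambda>N t. cnj (E (ctr c N) (cis t))) (\<lambda>t. cnj (E c (cis t))) sequentially"
    by (rule bounded_linear.uniform_limit[OF bounded_linear_cnj ULE])
  have cEc: "continuous_on UNIV (\<lambda>t. cnj (E c (cis t)))" by (intro continuous_intros cE)
  have UL: "uniform_limit {0..2*pi} (\<lambda>N t. E (ctr c N) (cis t) * cnj (E (ctr c N) (cis t)))
      (\<lambda>t. E c (cis t) * cnj (E c (cis t))) sequentially"
    by (rule uniform_lim_mult[OF ULE ULC bounded_circ[OF cE] bounded_circ[of "\<lambda>z. cnj (E c z)", OF cEc]])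
  have cN: "continuous_on {0..2*pi} (\<lambda>t. E (ctr c N) (cis t) * cnj (E (ctr c N) (cis t)))" for N
    by (intro continuous_intros continuous_on_subset[OF cEN]) auto
  obtain I J where I: "\<And>N. ((\<lambda>t. E (ctr c N) (cis t) * cnj (E (ctr c N) (cis t))) has_integral I N) {0..2*pi}"
    and J: "((\<lambda>t. E c (cis t) * cnj (E c (cis t))) has_integral J) {0..2*pi}"
    and IJ: "I \<longlonglongrightarrow> J"
    using uniform_limit_integral[OF UL cN] by auto
  have "(\<lambda>N. Re (I N / (2 * of_real pi))) \<longlonglongrightarrow> Re (J / (2 * of_real pi))"
    by (intro tendsto_Re tendsto_divide IJ tendsto_const) simp
  moreover have "hardy_inner (E (ctr c N)) (E (ctr c N)) = I N / (2 * of_real pi)" for N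
    unfolding hardy_inner_def using I[of N] by (simp add: integral_unique)
  moreover have "hardy_inner (E c) (E c) = J / (2 * of_real pi)"
    unfolding hardy_inner_def using J by (simp add: integral_unique)
  ultimately show ?thesis by simp
qed

lemma hn_sq:
  assumes "continuous_on UNIV (\<lambda>t. f (cis t))"
  shows "(hardy_norm f)\<^sup>2 = Re (hardy_inner f f)" and "Re (hardy_inner f f) \<ge> 0"
proof -
  have "2*pi * Re (hardy_inner f f) \<ge> 0"
    by (rule has_integral_nonneg[OF hardy_re[OF assms]]) simp
  then show nn: "Re (hardy_inner f f) \<ge> 0" using pi_gt_zero by (simp add: zero_le_mult_iff)
  then show "(hardy_norm f)\<^sup>2 = Re (hardy_inner f f)" unfolding hardy_norm_def by simp
qed

lemma final_alg:
  fixes X K C2 :: real and n \<sigma> :: nat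
  assumes X: "X \<ge> 0" and K: "K \<ge> 0" and C2: "C2 \<ge> 0" and n: "n \<ge> 1"
    and le: "(real n)^(2*\<sigma>) * X \<le> K * C2"
  shows "sqrt X \<le> sqrt K * (1 / real n ^ \<sigma>) * sqrt C2"
proof -
  have np: "real n ^ \<sigma> > 0" using n by simp
  have "sqrt ((real n ^ \<sigma>)\<^sup>2 * X) \<le> sqrt (K * C2)"
    by (rule real_sqrt_le_mono) (use le in \<open>simp add: power_mult[symmetric] mult.commute\<close>)
  moreover have "sqrt ((real n ^ \<sigma>)\<^sup>2 * X) = real n ^ \<sigma> * sqrt X"
    using np by (simp add: real_sqrt_mult)
  moreover have "sqrt (K * C2) = sqrt K * sqrt C2" by (simp add: real_sqrt_mult)
  ultimately have "real n ^ \<sigma> * sqrt X \<le> sqrt K * sqrt C2" by simp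
  then show ?thesis using np by (simp add: field_simps)
qed

theorem theorem8:
  fixes \<sigma> :: nat and a :: complex
  assumes "\<sigma> > 0" and "cmod a < 1"
  shows "\<exists>C::real. \<forall>c n. in_H2_sigma \<sigma> c \<longrightarrow> n \<ge> 1 \<longrightarrow>
           hardy_norm (\<lambda>z. taylor_fun c z
              - (\<Sum>l=1..n. hardy_inner (taylor_fun c) (laguerre a l) * laguerre a l z))
           \<le> C * (1 / real n ^ \<sigma>) * H2_sigma_norm \<sigma> c"
proof -
  note \<sigma> = assms(1) and a = assms(2)
  have gh: "gM a holomorphic_on ball 0 (RM a)"
    unfolding gM_def by (intro holomorphic_intros) (use den2_nz[OF a] in auto)
  have phh: "phM a holomorphic_on ball 0 (RM a)"
    unfolding phM_def by (intro holomorphic_intros) (use den2_nz[OF a] in auto)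
  obtain h where hh: "\<And>j. h j holomorphic_on ball 0 (RM a)"
    and hP0: "\<And>P. P holomorphic_on UNIV \<Longrightarrow> (\<forall>w\<in>ball 0 (RM a).
        (deriv^^\<sigma>) (\<lambda>w. gM a w * P (phM a w)) w = (\<Sum>j\<le>\<sigma>. h j w * (deriv^^j) P (phM a w)))"
    using chain_deriv[OF open_ball gh phh, of \<sigma>] by blast
  have hP: "\<And>P w. P holomorphic_on UNIV \<Longrightarrow> w \<in> ball 0 (RM a) \<Longrightarrow>
        (deriv^^\<sigma>) (\<lambda>w. gM a w * P (phM a w)) w = (\<Sum>j\<le>\<sigma>. h j w * (deriv^^j) P (phM a w))"
    using hP0 by blast
  have "\<exists>B. \<forall>w. cmod w = 1 \<longrightarrow> cmod (h j w) \<le> B" for j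
  proof -
    have sub: "sphere (0::complex) 1 \<subseteq> ball 0 (RM a)" using RM_gt[OF a] by auto
    have "compact (h j ` sphere 0 1)"
      by (rule compact_continuous_image[OF continuous_on_subset[OF holomorphic_on_imp_continuous_on[OF hh] sub]])
         simp
    then obtain B where "\<forall>x\<in>h j ` sphere 0 1. norm x \<le> B" using compact_imp_bounded bounded_iff by metis
    then show ?thesis by (intro exI[of _ B]) (auto simp: dist_norm)
  qed
  then obtain H where hb0: "\<forall>j w. cmod w = 1 \<longrightarrow> cmod (h j w) \<le> H j" by metis
  have hb: "\<And>j w. cmod w = 1 \<Longrightarrow> cmod (h j w) \<le> H j" using hb0 by blast
  define K where "K = Kc a \<sigma> H"
  have K0: "K \<ge> 0" unfolding K_def Kc_def by (intro add_nonneg_nonneg mult_nonneg_nonneg sum_nonneg) auto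
  show ?thesis
  proof (intro exI allI impI)
    fix c :: "nat \<Rightarrow> complex" and n :: nat
    assume cH: "in_H2_sigma \<sigma> c" and n: "n \<ge> 1"
    have sc: "summable (\<lambda>k. cmod (c k))" by (rule l1_summable[OF \<sigma> cH])
    define W where "W d k = (cmod ((1 + of_nat k ^ \<sigma>) * d k))\<^sup>2" for d k
    have sW: "summable (W c)" using cH unfolding in_H2_sigma_def W_def .
    define E where "E = (\<lambda>d z. taylor_fun d z - (\<Sum>l=1..n. hardy_inner (taylor_fun d) (laguerre a l) * laguerre a l z))"
    have lc: "continuous_on UNIV (\<lambda>t. laguerre a l (cis t))" for l by (rule lag_cont[OF a])
    have contE: "continuous_on UNIV (\<lambda>t. E d (cis t))" if "continuous_on UNIV (\<lambda>t. taylor_fun d (cis t))" for d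
      unfolding E_def by (intro continuous_intros that lc)
    have bN: "(real n)^(2*\<sigma>) * Re (hardy_inner (E (ctr c N)) (E (ctr c N))) \<le> K * suminf (W c)" for N
    proof -
      have cN: "\<And>k. k \<ge> N \<Longrightarrow> ctr c N k = 0" by (simp add: ctr_def)
      have pc: "(real n)^(2*\<sigma>) * (hardy_norm (E (ctr c N)))\<^sup>2 \<le> K * suminf (W (ctr c N))"
        using poly_case[OF a \<sigma> n hh hP hb cN] unfolding K_def W_def E_def .
      have "suminf (W (ctr c N)) = (\<Sum>k<N. W c k)"
        by (subst suminf_finite[of "{..<N}"]) (auto simp: W_def ctr_def)
      also have "\<dots> \<le> suminf (W c)" by (rule sum_le_suminf[OF sW]) (auto simp: W_def)
      finally have "K * suminf (W (ctr c N)) \<le> K * suminf (W c)" by (rule mult_left_mono[OF _ K0])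
      moreover have "(hardy_norm (E (ctr c N)))\<^sup>2 = Re (hardy_inner (E (ctr c N)) (E (ctr c N)))"
        by (rule hn_sq(1)[OF contE[OF cont_TN]])
      ultimately show ?thesis using pc by simp
    qed
    have conv: "(\<lambda>N. (real n)^(2*\<sigma>) * Re (hardy_inner (E (ctr c N)) (E (ctr c N))))
        \<longlonglongrightarrow> (real n)^(2*\<sigma>) * Re (hardy_inner (E c) (E c))"
      by (intro tendsto_mult_left) (unfold E_def, rule E_conv[OF a sc])
    have lim: "(real n)^(2*\<sigma>) * Re (hardy_inner (E c) (E c)) \<le> K * suminf (W c)"
      by (rule LIMSEQ_le_const2[OF conv]) (use bN in blast)
    have cEc: "continuous_on UNIV (\<lambda>t. E c (cis t))" by (rule contE[OF cont_T[OF sc]])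
    have "hardy_norm (E c) = sqrt (Re (hardy_inner (E c) (E c)))" unfolding hardy_norm_def ..
    also have "\<dots> \<le> sqrt K * (1 / real n ^ \<sigma>) * sqrt (suminf (W c))"
      by (rule final_alg[OF hn_sq(2)[OF cEc] K0 _ n lim]) (use sW in \<open>auto simp: W_def intro!: suminf_nonneg\<close>)
    also have "sqrt (suminf (W c)) = H2_sigma_norm \<sigma> c" unfolding H2_sigma_norm_def W_def ..
    finally show "hardy_norm (\<lambda>z. taylor_fun c z
              - (\<Sum>l=1..n. hardy_inner (taylor_fun c) (laguerre a l) * laguerre a l z))
           \<le> sqrt K * (1 / real n ^ \<sigma>) * H2_sigma_norm \<sigma> c" unfolding E_def .
  qed
qed


end
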